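(* Let $G$ be a compact, totally disconnected group and $\alpha$ an automorphism of $G$ that is topologically transitive. Then for every $k\in\mathbb{Z}\setminus\{0\}$ the map $\eta_k:G\to G$, $\eta_k(x)=x^{-1}\alpha^k(x)$, is surjective.
   Context: $\alpha$ is topologically transitive if there is $x\in G$ with $\{\alpha^n(x):n\in\mathbb{Z}\}$ dense in $G$. *)

theory Defs
  imports "HOL-Analysis.Analysis" "HOL-Algebra.Algebra"
begin

definition topological_group :: "('a, 'b) monoid_scheme \<Rightarrow> 'a topology \<Rightarrow> bool" where
  "topological_group G T \<longleftrightarrow> group G \<and> topspace T = carrier G \<and>
     continuous_map (prod_topology T T) T (\<lambda>p. fst p \<otimes>\<^bsub>G\<^esub> snd p) \<and>
     continuous_map T T (\<lambda>x. inv\<^bsub>G\<^esub> x)"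

definition totally_disconnected_space :: "'a topology \<Rightarrow> bool" where
  "totally_disconnected_space T \<longleftrightarrow>
     (\<forall>x\<in>topspace T. connected_component_of_set T x = {x})"

definition topological_automorphism ::
    "('a, 'b) monoid_scheme \<Rightarrow> 'a topology \<Rightarrow> ('a \<Rightarrow> 'a) \<Rightarrow> bool" where
  "topological_automorphism G T \<alpha> \<longleftrightarrow> \<alpha> \<in> iso G G \<and> homeomorphic_map T T \<alpha>"

definition aut_pow :: "('a, 'b) monoid_scheme \<Rightarrow> ('a \<Rightarrow> 'a) \<Rightarrow> int \<Rightarrow> 'a \<Rightarrow> 'a" where
  "aut_pow G \<alpha> k = (if 0 \<le> k then \<alpha> ^^ nat k else (inv_into (carrier G) \<alpha>) ^^ nat (- k))"

definition topologically_transitive ::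
    "('a, 'b) monoid_scheme \<Rightarrow> 'a topology \<Rightarrow> ('a \<Rightarrow> 'a) \<Rightarrow> bool" where
  "topologically_transitive G T \<alpha> \<longleftrightarrow>
     (\<exists>x\<in>carrier G. T closure_of {aut_pow G \<alpha> n x | n. True} = topspace T)"

end

theory Submission
  imports Defs
begin

lemma funpow_good:
  assumes "f \<in> hom G G" "continuous_map T T f"
  shows "(f ^^ n) \<in> hom G G \<and> continuous_map T T (f ^^ n)"
proof (induction n)
  case 0 show ?case by (simp add: hom_def)
next
  case (Suc n)
  have "continuous_map T T (f \<circ> (f^^n))"
    using Suc assms(2) by (blast intro: continuous_map_compose)
  then show ?case using Suc assms
    by (auto simp: hom_def Pi_iff o_def)
qed

lemma mult_cont:
  fixes G :: "('a, 'b) monoid_scheme" and T :: "'a topology" and Z :: "'c topology"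
    and u v :: "'c \<Rightarrow> 'a"
  assumes "continuous_map (prod_topology T T) T (\<lambda>p. mult G (fst p) (snd p))"
    "continuous_map Z T u" "continuous_map Z T v"
  shows "continuous_map Z T (\<lambda>y. mult G (u y) (v y))"
  using continuous_map_compose[OF continuous_map_pairedI[OF assms(2,3)] assms(1)]
  by (simp add: o_def)

theorem proposition7p1:
  fixes G :: "('a, 'b) monoid_scheme" and T :: "'a topology" and \<alpha> :: "'a \<Rightarrow> 'a"
  assumes "topological_group G T"
    and "compact_space T"
    and "totally_disconnected_space T"
    and "topological_automorphism G T \<alpha>"
    and "topologically_transitive G T \<alpha>"
    and "k \<noteq> (0::int)"
  shows "(\<lambda>x. inv\<^bsub>G\<^esub> x \<otimes>\<^bsub>G\<^esub> aut_pow G \<alpha> k x) ` carrier G = carrier G"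
proof -
  have grp: "group G" and top: "topspace T = carrier G"
    and mc: "continuous_map (prod_topology T T) T (\<lambda>p. fst p \<otimes>\<^bsub>G\<^esub> snd p)"
    and ic: "continuous_map T T (\<lambda>x. inv\<^bsub>G\<^esub> x)"
    using assms(1) by (auto simp: topological_group_def)
  interpret group G by (rule grp)
  have aiso: "\<alpha> \<in> iso G G" and ahom: "homeomorphic_map T T \<alpha>"
    using assms(4) by (auto simp: topological_automorphism_def)
  define \<beta> where "\<beta> = inv_into (carrier G) \<alpha>"
  have biso: "\<beta> \<in> iso G G" unfolding \<beta>_def by (rule iso_set_sym[OF aiso])
  have abij: "bij_betw \<alpha> (carrier G) (carrier G)" using aiso by (auto simp: iso_def)
  have ab: "\<alpha> (\<beta> x) = x" if "x \<in> carrier G" for x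
    using abij that unfolding \<beta>_def by (simp add: bij_betw_def f_inv_into_f)
  have ba: "\<beta> (\<alpha> x) = x" if "x \<in> carrier G" for x
    using abij that unfolding \<beta>_def by (simp add: bij_betw_def inv_into_f_f)
  have acont: "continuous_map T T \<alpha>" using ahom homeomorphic_imp_continuous_map by blast
  have bcont: "continuous_map T T \<beta>"
  proof -
    obtain g where g: "homeomorphic_maps T T \<alpha> g" using ahom homeomorphic_map_maps by blast
    then have gc: "continuous_map T T g" and gi: "\<And>y. y \<in> carrier G \<Longrightarrow> \<alpha> (g y) = y"
      and gt: "\<And>y. y \<in> carrier G \<Longrightarrow> g y \<in> carrier G"
      by (auto simp: homeomorphic_maps_def top continuous_map_def)
    show ?thesis
      by (rule continuous_map_eq[OF gc]) (metis ba gi gt top)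
  qed
  define A where "A = aut_pow G \<alpha>"
  have Agood: "A n \<in> hom G G \<and> continuous_map T T (A n)" for n
    using funpow_good[of \<alpha> G T] funpow_good[of \<beta> G T] aiso biso acont bcont
    by (auto simp: A_def aut_pow_def iso_def \<beta>_def[symmetric])
  have Ahom: "A n \<in> hom G G" and Acont: "continuous_map T T (A n)" for n using Agood by auto
  interpret Ah: group_hom G G "A n" for n
    by (simp add: group_hom_def group_hom_axioms_def grp Ahom)
  have Ac: "A n x \<in> carrier G" if "x \<in> carrier G" for n x
    using Ahom[of n] that by (auto simp: hom_def)
  have bfc: "(\<beta> ^^ m) x \<in> carrier G" if "x \<in> carrier G" for m x
    using funpow_good[of \<beta> G T m] biso bcont that by (auto simp: iso_def hom_def)
  have As1: "A (n+1) x = \<alpha> (A n x)" if "x \<in> carrier G" for n x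
  proof (cases "n \<ge> 0")
    case True
    then have "nat (n+1) = Suc (nat n)" by simp
    then show ?thesis using True by (simp add: A_def aut_pow_def)
  next
    case False
    define m where "m = nat (-n) - 1"
    have e1: "nat (-n) = Suc m" using False m_def by simp
    have e2: "nat (-(n+1)) = m" using False m_def by simp
    show ?thesis
    proof (cases "n + 1 = 0")
      case True
      then have "m = 0" using e2 by simp
      then show ?thesis using False True e1 ab[OF that] \<beta>_def
        by (simp add: A_def aut_pow_def)
    next
      case F2: False
      then show ?thesis using False e1 e2 ab[OF bfc[OF that]] \<beta>_def
        by (simp add: A_def aut_pow_def)
    qed
  qed
  have As2: "A (n-1) x = \<beta> (A n x)" if "x \<in> carrier G" for n x
    using As1[OF that, of "n-1"] ba[OF Ac[OF that, of "n-1"]] by simp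
  have A0: "A 0 x = x" for x by (simp add: A_def aut_pow_def)
  have Aadd: "A (m+n) x = A m (A n x)" if "x \<in> carrier G" for m n x
  proof (induction m rule: int_induct[where k=0])
    case base then show ?case by (simp add: A0)
  next
    case (step1 i)
    then show ?case using As1[OF that, of "i+n"] As1[OF Ac[OF that], of i]
      by (simp add: algebra_simps)
  next
    case (step2 i)
    then show ?case using As2[OF that, of "i+n"] As2[OF Ac[OF that], of i]
      by (simp add: algebra_simps)
  qed

  have Acomm: "A m (A k y) = A k (A m y)" if "y \<in> carrier G" for m y
    using Aadd[OF that, of m k] Aadd[OF that, of k m] by (simp add: add.commute)
  define Orb where "Orb c = (\<lambda>y. inv\<^bsub>G\<^esub> y \<otimes>\<^bsub>G\<^esub> c \<otimes>\<^bsub>G\<^esub> A k y) ` carrier G" for c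
  have Osub: "Orb c \<subseteq> carrier G" if "c \<in> carrier G" for c
    using that Ac by (auto simp: Orb_def)
  have Orefl: "c \<in> Orb c" if "c \<in> carrier G" for c
  proof -
    have "c = inv\<^bsub>G\<^esub> \<one>\<^bsub>G\<^esub> \<otimes>\<^bsub>G\<^esub> c \<otimes>\<^bsub>G\<^esub> A k \<one>\<^bsub>G\<^esub>" using that by simp
    then show ?thesis unfolding Orb_def by blast
  qed
  have Oshift: "A k c \<in> Orb c" if "c \<in> carrier G" for c
  proof -
    have "A k c = inv\<^bsub>G\<^esub> c \<otimes>\<^bsub>G\<^esub> c \<otimes>\<^bsub>G\<^esub> A k c" using that Ac[OF that, of k] by (simp add: m_assoc[symmetric])
    then show ?thesis using that unfolding Orb_def by blast
  qed
  have Otrans: "e \<in> Orb c" if hh: "c \<in> carrier G" "d \<in> Orb c" "e \<in> Orb d" for c d e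
  proof -
    obtain y where y: "y \<in> carrier G" "d = inv\<^bsub>G\<^esub> y \<otimes>\<^bsub>G\<^esub> c \<otimes>\<^bsub>G\<^esub> A k y" using hh(2) Orb_def by auto
    obtain z where z: "z \<in> carrier G" "e = inv\<^bsub>G\<^esub> z \<otimes>\<^bsub>G\<^esub> d \<otimes>\<^bsub>G\<^esub> A k z" using hh(3) Orb_def by auto
    have "e = inv\<^bsub>G\<^esub> (y \<otimes>\<^bsub>G\<^esub> z) \<otimes>\<^bsub>G\<^esub> c \<otimes>\<^bsub>G\<^esub> A k (y \<otimes>\<^bsub>G\<^esub> z)"
      using y z hh(1) Ac by (simp add: inv_mult_group m_assoc)
    then show ?thesis using y z unfolding Orb_def by blast
  qed
  have Osym: "c \<in> Orb d" if hh: "c \<in> carrier G" "d \<in> Orb c" for c d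
  proof -
    obtain y where y: "y \<in> carrier G" "d = inv\<^bsub>G\<^esub> y \<otimes>\<^bsub>G\<^esub> c \<otimes>\<^bsub>G\<^esub> A k y" using hh(2) Orb_def by auto
    have "c = inv\<^bsub>G\<^esub> (inv\<^bsub>G\<^esub> y) \<otimes>\<^bsub>G\<^esub> d \<otimes>\<^bsub>G\<^esub> A k (inv\<^bsub>G\<^esub> y)"
      using y hh(1) Ac by (simp add: m_assoc) (metis m_assoc r_inv l_one inv_closed)
    then show ?thesis using y unfolding Orb_def by blast
  qed
  have Oimg: "A m x \<in> Orb (A m c)" if hh: "c \<in> carrier G" "x \<in> Orb c" for m c x
  proof -
    obtain y where y: "y \<in> carrier G" "x = inv\<^bsub>G\<^esub> y \<otimes>\<^bsub>G\<^esub> c \<otimes>\<^bsub>G\<^esub> A k y" using hh(2) Orb_def by auto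
    have "A m x = inv\<^bsub>G\<^esub> (A m y) \<otimes>\<^bsub>G\<^esub> A m c \<otimes>\<^bsub>G\<^esub> A k (A m y)"
      using y hh(1) Ac Acomm by simp
    then show ?thesis using y Ac unfolding Orb_def by blast
  qed
  have L1: "A (k*q) c \<in> Orb c" if "c \<in> carrier G" for q c
  proof (induction q rule: int_induct[where k=0])
    case base then show ?case using Orefl[OF that] by (simp add: A0)
  next
    case (step1 i)
    have "A (k*(i+1)) c = A k (A (k*i) c)"
      using Aadd[OF that, of k "k*i"] by (simp add: algebra_simps)
    then show ?case using Otrans[OF that step1(2) Oshift] Ac that by simp
  next
    case (step2 i)
    define d where "d = A (k*(i-1)) c"
    have dc: "d \<in> carrier G" using Ac that d_def by simp
    have "A k d = A (k*i) c"
      using Aadd[OF that, of k "k*(i-1)"] d_def by (simp add: algebra_simps)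
    then have "A k d \<in> Orb c" using step2(2) by simp
    moreover have "d \<in> Orb (A k d)" using Osym[OF dc Oshift[OF dc]] .
    ultimately show ?case using Otrans[OF that] d_def by blast
  qed
  have Hs: "Hausdorff_space T"
  proof -
    have one_closed: "closedin T {\<one>\<^bsub>G\<^esub>}"
      using assms(3) closedin_connected_component_of[of T "\<one>\<^bsub>G\<^esub>"] top
      by (simp add: totally_disconnected_space_def)
    have cm: "continuous_map (prod_topology T T) T (\<lambda>p. inv\<^bsub>G\<^esub> (fst p) \<otimes>\<^bsub>G\<^esub> snd p)"
    proof -
      have "continuous_map (prod_topology T T) T (\<lambda>p. inv\<^bsub>G\<^esub> (fst p))"
        using continuous_map_compose[OF continuous_map_fst ic] by (simp add: o_def)
      from mult_cont[OF mc this continuous_map_snd] show ?thesis .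
    qed
    have "closedin (prod_topology T T) {p \<in> topspace (prod_topology T T). inv\<^bsub>G\<^esub> (fst p) \<otimes>\<^bsub>G\<^esub> snd p \<in> {\<one>\<^bsub>G\<^esub>}}"
      by (rule closedin_continuous_map_preimage[OF cm one_closed])
    moreover have "{p \<in> topspace (prod_topology T T). inv\<^bsub>G\<^esub> (fst p) \<otimes>\<^bsub>G\<^esub> snd p \<in> {\<one>\<^bsub>G\<^esub>}} = (\<lambda>x. (x,x)) ` topspace T"
    proof (intro equalityI subsetI)
      fix p assume "p \<in> {p \<in> topspace (prod_topology T T). inv\<^bsub>G\<^esub> (fst p) \<otimes>\<^bsub>G\<^esub> snd p \<in> {\<one>\<^bsub>G\<^esub>}}"
      then have p: "fst p \<in> carrier G" "snd p \<in> carrier G" "inv\<^bsub>G\<^esub> (fst p) \<otimes>\<^bsub>G\<^esub> snd p = \<one>\<^bsub>G\<^esub>"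
        by (auto simp: top)
      have "inv\<^bsub>G\<^esub> (snd p) = inv\<^bsub>G\<^esub> (fst p)" by (rule inv_equality[OF p(3) p(2) inv_closed[OF p(1)]])
      then have "fst p = snd p" using p(1,2) by (metis inv_inv)
      then show "p \<in> (\<lambda>x. (x,x)) ` topspace T" using p(1) top by (auto intro!: image_eqI[where x="fst p"] simp: prod_eq_iff)
    next
      fix p assume "p \<in> (\<lambda>x. (x,x)) ` topspace T"
      then show "p \<in> {p \<in> topspace (prod_topology T T). inv\<^bsub>G\<^esub> (fst p) \<otimes>\<^bsub>G\<^esub> snd p \<in> {\<one>\<^bsub>G\<^esub>}}"
        by (auto simp: top)
    qed
    ultimately show ?thesis by (simp add: Hausdorff_space_closedin_diagonal)
  qed
  have Oclosed: "closedin T (Orb c)" if "c \<in> carrier G" for c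
  proof -
    have cf: "continuous_map T T (\<lambda>y. inv\<^bsub>G\<^esub> y \<otimes>\<^bsub>G\<^esub> c \<otimes>\<^bsub>G\<^esub> A k y)"
    proof -
      have "continuous_map T T (\<lambda>y. c)" by (simp add: top that)
      from mult_cont[OF mc mult_cont[OF mc ic this] Acont] show ?thesis .
    qed
    have "compactin T (Orb c)" unfolding Orb_def
      using image_compactin[OF _ cf] assms(2) top by (simp add: compact_space_def)
    then show ?thesis using compactin_imp_closedin[OF Hs] by blast
  qed
  obtain x0 where x0: "x0 \<in> carrier G" and dense: "T closure_of {A n x0 | n. True} = topspace T"
    using assms(5) by (auto simp: topologically_transitive_def A_def)
  define Rs where "Rs = {r. \<exists>n. r = n mod k}"
  have finR: "finite Rs"
  proof -
    have "Rs \<subseteq> {-\<bar>k\<bar>..\<bar>k\<bar>}" unfolding Rs_def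
    proof clarify
      fix n
      have "\<bar>n mod k\<bar> < \<bar>k\<bar>" using abs_mod_less[OF assms(6)] .
      then show "n mod k \<in> {-\<bar>k\<bar>..\<bar>k\<bar>}" by auto
    qed
    then show ?thesis using finite_subset by blast
  qed
  define U where "U = \<Union> ((\<lambda>r. Orb (A r x0)) ` Rs)"
  have Uclosed: "closedin T U" unfolding U_def
    using finR Oclosed Ac x0 by (intro closedin_Union) auto
  have orbU: "{A n x0 | n. True} \<subseteq> U"
  proof clarify
    fix n
    have "A n x0 = A (k*(n div k)) (A (n mod k) x0)"
      using Aadd[OF x0, of "k*(n div k)" "n mod k"] by simp
    also have "\<dots> \<in> Orb (A (n mod k) x0)" by (rule L1[OF Ac[OF x0]])
    finally show "A n x0 \<in> U" unfolding U_def Rs_def by blast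
  qed
  have "carrier G \<subseteq> U"
    using closure_of_minimal[OF orbU Uclosed] dense top by simp
  then obtain r where "\<one>\<^bsub>G\<^esub> \<in> Orb (A r x0)" unfolding U_def by auto
  then have r: "A r x0 \<in> Orb \<one>\<^bsub>G\<^esub>" by (rule Osym[OF Ac[OF x0]])
  have orbO: "{A n x0 | n. True} \<subseteq> Orb \<one>\<^bsub>G\<^esub>"
  proof clarify
    fix n
    have "A n x0 = A (n-r) (A r x0)" using Aadd[OF x0, of "n-r" r] by simp
    also have "\<dots> \<in> Orb (A (n-r) \<one>\<^bsub>G\<^esub>)" by (rule Oimg[OF one_closed r])
    finally show "A n x0 \<in> Orb \<one>\<^bsub>G\<^esub>" by simp
  qed
  have "carrier G \<subseteq> Orb \<one>\<^bsub>G\<^esub>"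
    using closure_of_minimal[OF orbO Oclosed] dense top by simp
  moreover have "Orb \<one>\<^bsub>G\<^esub> = (\<lambda>x. inv\<^bsub>G\<^esub> x \<otimes>\<^bsub>G\<^esub> A k x) ` carrier G"
    unfolding Orb_def by (intro image_cong) auto
  ultimately show ?thesis using Osub[OF one_closed] by (simp add: A_def)
qed

end
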